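(* Let $I$ be a proper ideal of a monoid $M$. Then $\mathfrak{L}(\mathrm{Val},\mathrm{CF},M)=\mathfrak{L}(\mathrm{Val},\mathrm{CF},M/I)$.
   Context: An ideal of a monoid $M$ is $I\subseteq M$ with $MIM\subseteq I$; it is proper if $I\ne M$. The Rees quotient $M/I$ is the quotient of $M$ by the congruence $a\sim b$ iff $a=b$ or $a,b\in I$; its elements are $I$ and the singletons $\{x\}$, $x\in M\setminus I$, with identity $\{1\}$. A context-free valence grammar over a monoid $N$ is $(V,T,P,S,N)$ with nonterminals $V$, terminals $T$, start symbol $S\in V$ and a finite set $P$ of rules $(A\to\alpha,n)$ with $A\in V$, $\alpha\in(V\cup T)^*$, $n\in N$. One step: $(w_1Aw_2,m)\Rightarrow(w_1\alpha w_2,mn)$ for a rule $(A\to\alpha,n)$. The generated language is $\{w\in T^*:(S,1)\Rightarrow^*(w,1)\}$. $\mathfrak{L}(\mathrm{Val},\mathrm{CF},N)$ is the family of languages generated by context-free valence grammars over $N$. *)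

theory Defs
  imports "HOL-Algebra.Group"
begin

definition monoid_ideal :: "('a, 'b) monoid_scheme \<Rightarrow> 'a set \<Rightarrow> bool" where
  "monoid_ideal M I \<longleftrightarrow> I \<subseteq> carrier M \<and>
     (\<forall>x\<in>carrier M. \<forall>i\<in>I. \<forall>y\<in>carrier M. x \<otimes>\<^bsub>M\<^esub> i \<otimes>\<^bsub>M\<^esub> y \<in> I)"

definition rees_class :: "'a set \<Rightarrow> 'a \<Rightarrow> 'a set" where
  "rees_class I x = (if x \<in> I then I else {x})"

text \<open>Multiplication of classes: multiply representatives (well defined since I is an ideal).\<close>
definition rees_quotient :: "('a, 'b) monoid_scheme \<Rightarrow> 'a set \<Rightarrow> 'a set monoid" where
  "rees_quotient M I =
     \<lparr> carrier = rees_class I ` carrier M,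
       mult = (\<lambda>A B. rees_class I
                 (SOME c. \<exists>a\<in>A. \<exists>b\<in>B. c = a \<otimes>\<^bsub>M\<^esub> b)),
       one = rees_class I \<one>\<^bsub>M\<^esub> \<rparr>"

text \<open>A grammar is (V, T, P, S); nonterminals are natural numbers, terminals of type 't.
  Sentential forms are lists over nat + 't (Inl = nonterminal, Inr = terminal).
  A rule is (A, alpha, n).\<close>

type_synonym ('t, 'm) valence_grammar =
  "nat set \<times> 't set \<times> (nat \<times> (nat + 't) list \<times> 'm) set \<times> nat"

definition valence_grammar ::
  "('m, 'b) monoid_scheme \<Rightarrow> ('t, 'm) valence_grammar \<Rightarrow> bool" where
  "valence_grammar N G = (case G of (V, T, P, S) \<Rightarrow>
      finite V \<and> finite T \<and> S \<in> V \<and> finite P \<and>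
      (\<forall>(A, \<alpha>, n) \<in> P. A \<in> V \<and> set \<alpha> \<subseteq> Inl ` V \<union> Inr ` T \<and> n \<in> carrier N))"

definition valence_step ::
  "('m, 'b) monoid_scheme \<Rightarrow> (nat \<times> (nat + 't) list \<times> 'm) set
     \<Rightarrow> (nat + 't) list \<times> 'm \<Rightarrow> (nat + 't) list \<times> 'm \<Rightarrow> bool" where
  "valence_step N P c c' \<longleftrightarrow>
     (\<exists>w1 A w2 \<alpha> n m. (A, \<alpha>, n) \<in> P \<and> c = (w1 @ Inl A # w2, m) \<and>
        c' = (w1 @ \<alpha> @ w2, m \<otimes>\<^bsub>N\<^esub> n))"

definition valence_lang ::
  "('m, 'b) monoid_scheme \<Rightarrow> ('t, 'm) valence_grammar \<Rightarrow> 't list set" where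
  "valence_lang N G = (case G of (V, T, P, S) \<Rightarrow>
      {w. set w \<subseteq> T \<and>
          (valence_step N P)\<^sup>*\<^sup>* ([Inl S], \<one>\<^bsub>N\<^esub>) (map Inr w, \<one>\<^bsub>N\<^esub>)})"

definition Val_CF :: "('m, 'b) monoid_scheme \<Rightarrow> 't list set set" where
  "Val_CF N = {L. \<exists>G. valence_grammar N G \<and> L = valence_lang N G}"

end

theory Submission
  imports Defs
begin

lemma ideal_one_notin:
  assumes "monoid M" "monoid_ideal M I" "I \<noteq> carrier M"
  shows "\<one>\<^bsub>M\<^esub> \<notin> I"
proof
  assume h: "\<one>\<^bsub>M\<^esub> \<in> I"
  have "carrier M \<subseteq> I"
  proof
    fix x assume x: "x \<in> carrier M"
    have "x \<otimes>\<^bsub>M\<^esub> \<one>\<^bsub>M\<^esub> \<otimes>\<^bsub>M\<^esub> \<one>\<^bsub>M\<^esub> \<in> I"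
      using assms(2) h x monoid.one_closed[OF assms(1)] unfolding monoid_ideal_def by blast
    thus "x \<in> I" using x assms(1) by (simp add: monoid.r_one)
  qed
  thus False using assms(2,3) unfolding monoid_ideal_def by blast
qed

lemma ideal_mult_notin:
  assumes "monoid M" "monoid_ideal M I" "a \<in> carrier M" "b \<in> carrier M"
    "a \<otimes>\<^bsub>M\<^esub> b \<notin> I"
  shows "a \<notin> I \<and> b \<notin> I"
proof
  show "a \<notin> I"
  proof
    assume "a \<in> I"
    hence "\<one>\<^bsub>M\<^esub> \<otimes>\<^bsub>M\<^esub> a \<otimes>\<^bsub>M\<^esub> b \<in> I"
      using assms monoid.one_closed[OF assms(1)] unfolding monoid_ideal_def by blast
    thus False using assms by (simp add: monoid.l_one)
  qed
  show "b \<notin> I"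
  proof
    assume "b \<in> I"
    hence "a \<otimes>\<^bsub>M\<^esub> b \<otimes>\<^bsub>M\<^esub> \<one>\<^bsub>M\<^esub> \<in> I"
      using assms monoid.one_closed[OF assms(1)] unfolding monoid_ideal_def by blast
    thus False using assms monoid.m_closed[OF assms(1)] by (simp add: monoid.r_one)
  qed
qed

lemma rees_hom:
  assumes "monoid M" "monoid_ideal M I" "a \<in> carrier M" "b \<in> carrier M"
  shows "rees_class I a \<otimes>\<^bsub>rees_quotient M I\<^esub> rees_class I b = rees_class I (a \<otimes>\<^bsub>M\<^esub> b)"
proof (cases "a \<notin> I \<and> b \<notin> I")
  case True
  then show ?thesis by (simp add: rees_quotient_def rees_class_def)
next
  case False
  have True: "a \<otimes>\<^bsub>M\<^esub> b \<in> I" using ideal_mult_notin[OF assms] False by blast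
  have ex: "\<exists>c. \<exists>x\<in>rees_class I a. \<exists>y\<in>rees_class I b. c = x \<otimes>\<^bsub>M\<^esub> y"
    by (auto simp: rees_class_def)
  let ?c = "SOME c. \<exists>x\<in>rees_class I a. \<exists>y\<in>rees_class I b. c = x \<otimes>\<^bsub>M\<^esub> y"
  obtain x y where xy: "x \<in> rees_class I a" "y \<in> rees_class I b" "?c = x \<otimes>\<^bsub>M\<^esub> y"
    using someI_ex[OF ex] by blast
  have Ic: "I \<subseteq> carrier M" using assms(2) unfolding monoid_ideal_def by blast
  have "?c \<in> I"
  proof -
    have "x \<in> carrier M" "y \<in> carrier M" using xy Ic assms by (auto simp: rees_class_def split: if_splits)
    moreover have "a \<in> I \<or> b \<in> I" using False by blast
    ultimately show ?thesis
    proof (cases "a \<in> I")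
      case True
      then have "x \<in> I" using xy by (simp add: rees_class_def)
      then have "\<one>\<^bsub>M\<^esub> \<otimes>\<^bsub>M\<^esub> x \<otimes>\<^bsub>M\<^esub> y \<in> I"
        using assms(2) \<open>y \<in> carrier M\<close> monoid.one_closed[OF assms(1)] unfolding monoid_ideal_def by blast
      then show ?thesis using xy Ic \<open>x \<in> I\<close> assms(1) by (auto simp: monoid.l_one)
    next
      case False
      then have "b \<in> I" using \<open>a \<in> I \<or> b \<in> I\<close> by blast
      then have "y \<in> I" using xy by (simp add: rees_class_def)
      then have "x \<otimes>\<^bsub>M\<^esub> y \<otimes>\<^bsub>M\<^esub> \<one>\<^bsub>M\<^esub> \<in> I"
        using assms(2) \<open>x \<in> carrier M\<close> monoid.one_closed[OF assms(1)] unfolding monoid_ideal_def by blast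
      then show ?thesis using xy Ic \<open>y \<in> I\<close> \<open>x \<in> carrier M\<close> assms(1)
        by (auto simp: monoid.r_one monoid.m_closed)
    qed
  qed
  then show ?thesis using True by (simp add: rees_quotient_def rees_class_def)
qed

lemma rees_eq_one:
  assumes "\<one>\<^bsub>M\<^esub> \<notin> I" "rees_class I m = rees_class I \<one>\<^bsub>M\<^esub>"
  shows "m = \<one>\<^bsub>M\<^esub>"
  using assms by (auto simp: rees_class_def split: if_splits)

lemma fwd:
  assumes "monoid M"
    and hom: "\<And>a b. a \<in> carrier M \<Longrightarrow> b \<in> carrier M \<Longrightarrow> h (a \<otimes>\<^bsub>M\<^esub> b) = h a \<otimes>\<^bsub>N\<^esub> h b"
    and PP: "\<And>A \<alpha> n. (A, \<alpha>, n) \<in> P \<Longrightarrow> n \<in> carrier M \<and> (A, \<alpha>, h n) \<in> P'"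
    and st: "(valence_step M P)\<^sup>*\<^sup>* (s0, m0) (s, m)"
    and m0: "m0 \<in> carrier M"
  shows "(valence_step N P')\<^sup>*\<^sup>* (s0, h m0) (s, h m) \<and> m \<in> carrier M"
  using st
proof (induction rule: rtranclp_induct2)
  case refl
  then show ?case using m0 by simp
next
  case (step s1 m1 s m)
  have y: "True" by simp
  from step.IH have ih: "(valence_step N P')\<^sup>*\<^sup>* (s0, h m0) (s1, h m1)" "m1 \<in> carrier M" by auto
  from step.hyps(2) obtain w1 A w2 \<alpha> n where r: "(A, \<alpha>, n) \<in> P" "s1 = w1 @ Inl A # w2"
    "s = w1 @ \<alpha> @ w2" "m = m1 \<otimes>\<^bsub>M\<^esub> n"
    unfolding valence_step_def by blast
  have n: "n \<in> carrier M" "(A, \<alpha>, h n) \<in> P'" using PP[OF r(1)] by auto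
  have "valence_step N P' (s1, h m1) (s, h m)"
    unfolding valence_step_def using r n hom[OF ih(2) n(1)] by blast
  then show ?case using ih n r assms(1) by (auto simp: monoid.m_closed)
qed

lemma bwd:
  assumes "monoid M"
    and hom: "\<And>a b. a \<in> carrier M \<Longrightarrow> b \<in> carrier M \<Longrightarrow> h (a \<otimes>\<^bsub>M\<^esub> b) = h a \<otimes>\<^bsub>N\<^esub> h b"
    and notin: "\<And>a b. a \<in> carrier M \<Longrightarrow> b \<in> carrier M \<Longrightarrow> a \<otimes>\<^bsub>M\<^esub> b \<notin> I \<Longrightarrow> a \<notin> I \<and> b \<notin> I"
    and PP: "\<And>A \<alpha> k. (A, \<alpha>, k) \<in> P' \<Longrightarrow> \<exists>n\<in>carrier M. k = h n \<and> (n \<notin> I \<longrightarrow> (A, \<alpha>, n) \<in> P)"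
    and st: "(valence_step N P')\<^sup>*\<^sup>* (s0, h m0) (s, c)"
    and m0: "m0 \<in> carrier M"
  shows "\<exists>m\<in>carrier M. c = h m \<and> (m \<notin> I \<longrightarrow> (valence_step M P)\<^sup>*\<^sup>* (s0, m0) (s, m))"
  using st
proof (induction rule: rtranclp_induct2)
  case refl
  then show ?case using m0 by auto
next
  case (step s1 c1 s c)
  have y: "True" by simp
  from step.IH obtain m1 where ih: "m1 \<in> carrier M" "c1 = h m1"
    "m1 \<notin> I \<longrightarrow> (valence_step M P)\<^sup>*\<^sup>* (s0, m0) (s1, m1)" by auto
  from step.hyps(2) obtain w1 A w2 \<alpha> k where r: "(A, \<alpha>, k) \<in> P'" "s1 = w1 @ Inl A # w2"
    "s = w1 @ \<alpha> @ w2" "c = c1 \<otimes>\<^bsub>N\<^esub> k"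
    unfolding valence_step_def by blast
  obtain n where n: "n \<in> carrier M" "k = h n" "n \<notin> I \<longrightarrow> (A, \<alpha>, n) \<in> P" using PP[OF r(1)] by blast
  have c: "c = h (m1 \<otimes>\<^bsub>M\<^esub> n)" using hom[OF ih(1) n(1)] r(4) ih(2) n(2) by simp
  have "m1 \<otimes>\<^bsub>M\<^esub> n \<notin> I \<longrightarrow> (valence_step M P)\<^sup>*\<^sup>* (s0, m0) (s, m1 \<otimes>\<^bsub>M\<^esub> n)"
  proof
    assume "m1 \<otimes>\<^bsub>M\<^esub> n \<notin> I"
    then have "m1 \<notin> I" "n \<notin> I" using notin[OF ih(1) n(1)] by auto
    then have "valence_step M P (s1, m1) (s, m1 \<otimes>\<^bsub>M\<^esub> n)"
      unfolding valence_step_def using r n by blast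
    then show "(valence_step M P)\<^sup>*\<^sup>* (s0, m0) (s, m1 \<otimes>\<^bsub>M\<^esub> n)"
      using ih(3) \<open>m1 \<notin> I\<close> by (meson rtranclp.rtrancl_into_rtrancl)
  qed
  then show ?case using c ih(1) n(1) assms(1) by (auto simp: monoid.m_closed)
qed

theorem proposition3:
  fixes M :: "'a monoid" and I :: "'a set"
  assumes "monoid M"
    and "monoid_ideal M I"
    and "I \<noteq> carrier M"
  shows "(Val_CF M :: 't list set set) = Val_CF (rees_quotient M I)"
proof -
  let ?Q = "rees_quotient M I"
  let ?h = "rees_class I"
  have one: "\<one>\<^bsub>M\<^esub> \<notin> I" using ideal_one_notin[OF assms] .
  have hom: "\<And>a b. a \<in> carrier M \<Longrightarrow> b \<in> carrier M \<Longrightarrow> ?h (a \<otimes>\<^bsub>M\<^esub> b) = ?h a \<otimes>\<^bsub>?Q\<^esub> ?h b"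
    using rees_hom[OF assms(1,2)] by simp
  have notin: "\<And>a b. a \<in> carrier M \<Longrightarrow> b \<in> carrier M \<Longrightarrow> a \<otimes>\<^bsub>M\<^esub> b \<notin> I \<Longrightarrow> a \<notin> I \<and> b \<notin> I"
    using ideal_mult_notin[OF assms(1,2)] by blast
  have oneQ: "\<one>\<^bsub>?Q\<^esub> = ?h \<one>\<^bsub>M\<^esub>" by (simp add: rees_quotient_def)
  have carQ: "carrier ?Q = ?h ` carrier M" by (simp add: rees_quotient_def)
  have one_c: "\<one>\<^bsub>M\<^esub> \<in> carrier M" using assms(1) by (simp add: monoid.one_closed)
  show ?thesis
  proof
    show "(Val_CF M :: 't list set set) \<subseteq> Val_CF ?Q"
    proof
      fix L :: "'t list set" assume "L \<in> Val_CF M"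
      then obtain V T P S where G: "valence_grammar M (V, T, P, S)" and L: "L = valence_lang M (V, T, P, S)"
        unfolding Val_CF_def by force
      define P' where "P' = (\<lambda>(A, \<alpha>, n). (A, \<alpha>, ?h n)) ` P"
      have G': "valence_grammar ?Q (V, T, P', S)"
        using G unfolding valence_grammar_def P'_def carQ by fastforce
      have PP1: "\<And>A \<alpha> n. (A, \<alpha>, n) \<in> P \<Longrightarrow> n \<in> carrier M \<and> (A, \<alpha>, ?h n) \<in> P'"
        using G unfolding valence_grammar_def P'_def by force
      have PP2: "\<And>A \<alpha> k. (A, \<alpha>, k) \<in> P' \<Longrightarrow> \<exists>n\<in>carrier M. k = ?h n \<and> (n \<notin> I \<longrightarrow> (A, \<alpha>, n) \<in> P)"
        using G unfolding valence_grammar_def P'_def by force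
      have "L = valence_lang ?Q (V, T, P', S)"
      proof -
        have "(valence_step M P)\<^sup>*\<^sup>* ([Inl S], \<one>\<^bsub>M\<^esub>) (map Inr w, \<one>\<^bsub>M\<^esub>) \<longleftrightarrow>
              (valence_step ?Q P')\<^sup>*\<^sup>* ([Inl S], \<one>\<^bsub>?Q\<^esub>) (map Inr w, \<one>\<^bsub>?Q\<^esub>)" for w :: "'t list"
        proof
          assume "(valence_step M P)\<^sup>*\<^sup>* ([Inl S], \<one>\<^bsub>M\<^esub>) (map Inr w, \<one>\<^bsub>M\<^esub>)"
          from fwd[OF assms(1) hom PP1 this one_c] show "(valence_step ?Q P')\<^sup>*\<^sup>* ([Inl S], \<one>\<^bsub>?Q\<^esub>) (map Inr w, \<one>\<^bsub>?Q\<^esub>)"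
            using oneQ by simp
        next
          assume "(valence_step ?Q P')\<^sup>*\<^sup>* ([Inl S], \<one>\<^bsub>?Q\<^esub>) (map Inr w, \<one>\<^bsub>?Q\<^esub>)"
          then have "(valence_step ?Q P')\<^sup>*\<^sup>* ([Inl S], ?h \<one>\<^bsub>M\<^esub>) (map Inr w, ?h \<one>\<^bsub>M\<^esub>)" using oneQ by simp
          from bwd[OF assms(1) hom notin PP2 this one_c] obtain m where
            "m \<in> carrier M" "?h \<one>\<^bsub>M\<^esub> = ?h m" "m \<notin> I \<longrightarrow> (valence_step M P)\<^sup>*\<^sup>* ([Inl S], \<one>\<^bsub>M\<^esub>) (map Inr w, m)"
            by blast
          moreover have "m = \<one>\<^bsub>M\<^esub>" using rees_eq_one[OF one] calculation(2) by metis
          ultimately show "(valence_step M P)\<^sup>*\<^sup>* ([Inl S], \<one>\<^bsub>M\<^esub>) (map Inr w, \<one>\<^bsub>M\<^esub>)" using one by simp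
        qed
        then show ?thesis unfolding L valence_lang_def by simp
      qed
      then show "L \<in> Val_CF ?Q" using G' unfolding Val_CF_def by blast
    qed
  next
    show "Val_CF ?Q \<subseteq> (Val_CF M :: 't list set set)"
    proof
      fix L :: "'t list set" assume "L \<in> Val_CF ?Q"
      then obtain V T P' S where G': "valence_grammar ?Q (V, T, P', S)" and L: "L = valence_lang ?Q (V, T, P', S)"
        unfolding Val_CF_def by force
      define P where "P = {(A, \<alpha>, n). n \<in> carrier M \<and> n \<notin> I \<and> (A, \<alpha>, ?h n) \<in> P'}"
      have fin: "finite P"
      proof -
        have "P \<subseteq> (\<lambda>(A, \<alpha>, k). (A, \<alpha>, the_elem k)) ` P'"
        proof
          fix x assume "x \<in> P"
          then obtain A \<alpha> n where x: "x = (A, \<alpha>, n)" "n \<notin> I" "(A, \<alpha>, ?h n) \<in> P'"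
            unfolding P_def by blast
          then have "?h n = {n}" by (simp add: rees_class_def)
          then show "x \<in> (\<lambda>(A, \<alpha>, k). (A, \<alpha>, the_elem k)) ` P'"
            using x by (force intro: rev_image_eqI)
        qed
        moreover have "finite P'" using G' unfolding valence_grammar_def by simp
        ultimately show ?thesis using finite_subset by blast
      qed
      have G: "valence_grammar M (V, T, P, S)"
        using G' fin unfolding valence_grammar_def P_def by fastforce
      have PP1: "\<And>A \<alpha> n. (A, \<alpha>, n) \<in> P \<Longrightarrow> n \<in> carrier M \<and> (A, \<alpha>, ?h n) \<in> P'"
        unfolding P_def by blast
      have PP2: "\<And>A \<alpha> k. (A, \<alpha>, k) \<in> P' \<Longrightarrow> \<exists>n\<in>carrier M. k = ?h n \<and> (n \<notin> I \<longrightarrow> (A, \<alpha>, n) \<in> P)"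
      proof -
        fix A \<alpha> k assume k: "(A, \<alpha>, k) \<in> P'"
        then have "k \<in> carrier ?Q" using G' unfolding valence_grammar_def by fastforce
        then obtain n where "n \<in> carrier M" "k = ?h n" using carQ by blast
        then show "\<exists>n\<in>carrier M. k = ?h n \<and> (n \<notin> I \<longrightarrow> (A, \<alpha>, n) \<in> P)"
          using k unfolding P_def by blast
      qed
      have "L = valence_lang M (V, T, P, S)"
      proof -
        have "(valence_step M P)\<^sup>*\<^sup>* ([Inl S], \<one>\<^bsub>M\<^esub>) (map Inr w, \<one>\<^bsub>M\<^esub>) \<longleftrightarrow>
              (valence_step ?Q P')\<^sup>*\<^sup>* ([Inl S], \<one>\<^bsub>?Q\<^esub>) (map Inr w, \<one>\<^bsub>?Q\<^esub>)" for w :: "'t list"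
        proof
          assume "(valence_step M P)\<^sup>*\<^sup>* ([Inl S], \<one>\<^bsub>M\<^esub>) (map Inr w, \<one>\<^bsub>M\<^esub>)"
          from fwd[OF assms(1) hom PP1 this one_c] show "(valence_step ?Q P')\<^sup>*\<^sup>* ([Inl S], \<one>\<^bsub>?Q\<^esub>) (map Inr w, \<one>\<^bsub>?Q\<^esub>)"
            using oneQ by simp
        next
          assume "(valence_step ?Q P')\<^sup>*\<^sup>* ([Inl S], \<one>\<^bsub>?Q\<^esub>) (map Inr w, \<one>\<^bsub>?Q\<^esub>)"
          then have "(valence_step ?Q P')\<^sup>*\<^sup>* ([Inl S], ?h \<one>\<^bsub>M\<^esub>) (map Inr w, ?h \<one>\<^bsub>M\<^esub>)" using oneQ by simp
          from bwd[OF assms(1) hom notin PP2 this one_c] obtain m where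
            "m \<in> carrier M" "?h \<one>\<^bsub>M\<^esub> = ?h m" "m \<notin> I \<longrightarrow> (valence_step M P)\<^sup>*\<^sup>* ([Inl S], \<one>\<^bsub>M\<^esub>) (map Inr w, m)"
            by blast
          moreover have "m = \<one>\<^bsub>M\<^esub>" using rees_eq_one[OF one] calculation(2) by metis
          ultimately show "(valence_step M P)\<^sup>*\<^sup>* ([Inl S], \<one>\<^bsub>M\<^esub>) (map Inr w, \<one>\<^bsub>M\<^esub>)" using one by simp
        qed
        then show ?thesis unfolding L valence_lang_def by simp
      qed
      then show "L \<in> Val_CF M" using G unfolding Val_CF_def by blast
    qed
  qed
qed

end
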